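(* For every $n\ge -1$, the join product $\ast\colon \mathrm{N}(\triangle_+^n)^{\otimes 2}\to\mathrm{N}(\triangle_+^n)$ is a chain map, natural in $[n]$, and it makes $\mathrm{N}(\triangle_+^n)$ a Poincaré duality algebra of formal dimension $n+1$ whose unit is the empty simplex $[-1]\to[n]$.
   Context: Coefficients are in $\mathbb{Z}$. $\mathrm{N}(\triangle_+^n)$ is the right suspension of the normalized chain complex of the standard augmented $n$-simplex: it is the free abelian group with basis the subsets $\{v_0<\dots<v_{k-1}\}\subseteq\{0,\dots,n\}$, $0\le k\le n+1$, written $[v_0,\dots,v_{k-1}]$ and placed in degree $k$ (the empty simplex $\emptyset$ in degree $0$), with the convention $[v_{\pi(0)},\dots,v_{\pi(k-1)}]=(-1)^{\mathrm{sgn}\,\pi}[v_0,\dots,v_{k-1}]$, and differential $\partial[v_0,\dots,v_{k-1}]=\sum_i(-1)^i[v_0,\dots,\widehat{v_i},\dots,v_{k-1}]$ (so $\partial[v]=\emptyset$). The join product sends $[v_0,\dots,v_{p-1}]\otimes[v_p,\dots,v_{m-1}]$ to $[v_0,\dots,v_{m-1}]$ (i.e. $(-1)^{\mathrm{sgn}\,\pi}$ times the ordered generator, $\pi$ the ordering permutation) if all $v_i$ are distinct, and to $0$ otherwise. A Poincaré duality algebra of formal dimension $d$ is a connected graded-commutative algebra $A$, finitely generated in each degree, such that $A_i=0$ for $i>d$, $A_d$ has rank $1$, and the multiplication pairing $A_i\otimes A_{d-i}\to A_d$ is non-degenerate for all $i$. *)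

theory Defs
  imports Main "HOL-Library.Function_Algebras"
begin

text \<open>Chains of N(triangle_+^n), with n+1 = N vertices {0,...,N-1}.  A chain is a
  function from finite subsets of the vertex set to integer coefficients; the
  subset S (listed increasingly) is the basis element [v_0,...,v_{k-1}] of degree card S.
  The empty set is the empty simplex (degree 0).\<close>

type_synonym chain = "nat set \<Rightarrow> int"

definition smul :: "int \<Rightarrow> chain \<Rightarrow> chain" where
  "smul k c = (\<lambda>U. k * c U)"

definition basis :: "nat set \<Rightarrow> chain" where
  "basis S = (\<lambda>U. if U = S then 1 else 0)"

definition nchains :: "nat \<Rightarrow> chain set" where
  "nchains N = {c. \<forall>S. c S \<noteq> 0 \<longrightarrow> S \<subseteq> {..<N}}"

definition hom :: "nat \<Rightarrow> nat \<Rightarrow> chain set" where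
  "hom N k = {c \<in> nchains N. \<forall>S. c S \<noteq> 0 \<longrightarrow> card S = k}"

text \<open>Number of inversions of a list; (-1)^inversions xs is the sign of the
  permutation ordering xs.\<close>
definition inversions :: "nat list \<Rightarrow> nat" where
  "inversions xs = card {(i, j). i < j \<and> j < length xs \<and> xs ! j < xs ! i}"

definition simplex :: "nat list \<Rightarrow> chain" where
  "simplex xs = (if distinct xs then smul ((-1) ^ inversions xs) (basis (set xs)) else 0)"

definition join_basis :: "nat set \<Rightarrow> nat set \<Rightarrow> chain" where
  "join_basis S T = (if S \<inter> T = {} then simplex (sorted_list_of_set S @ sorted_list_of_set T) else 0)"

definition join :: "nat \<Rightarrow> chain \<Rightarrow> chain \<Rightarrow> chain" where
  "join N a b = (\<Sum>S\<in>Pow {..<N}. \<Sum>T\<in>Pow {..<N}. smul (a S * b T) (join_basis S T))"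

text \<open>Differential: d[v_0,...,v_{k-1}] = sum_i (-1)^i [v_0,..,^v_i,..,v_{k-1}], so d[v] = empty.\<close>
definition bdry_basis :: "nat set \<Rightarrow> chain" where
  "bdry_basis S = (\<Sum>i<card S. smul ((-1) ^ i) (basis (S - {sorted_list_of_set S ! i})))"

definition bdry :: "nat \<Rightarrow> chain \<Rightarrow> chain" where
  "bdry N c = (\<Sum>S\<in>Pow {..<N}. smul (c S) (bdry_basis S))"

text \<open>Morphisms [m] -> [n] of the augmented simplex category (M = m+1, N = n+1 vertices),
  and the induced map on normalized nchains (degenerate simplices go to 0).\<close>
definition simplex_map :: "nat \<Rightarrow> nat \<Rightarrow> (nat \<Rightarrow> nat) \<Rightarrow> bool" where
  "simplex_map M N f \<longleftrightarrow> (\<forall>i<M. f i < N) \<and> (\<forall>i j. i \<le> j \<longrightarrow> j < M \<longrightarrow> f i \<le> f j)"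

definition Nmap :: "nat \<Rightarrow> (nat \<Rightarrow> nat) \<Rightarrow> chain \<Rightarrow> chain" where
  "Nmap M f c = (\<Sum>S\<in>Pow {..<M}. smul (c S) (if inj_on f S then simplex (map f (sorted_list_of_set S)) else 0))"

definition span_Z :: "chain set \<Rightarrow> chain set" where
  "span_Z G = {x. \<exists>F c. finite F \<and> F \<subseteq> G \<and> x = (\<Sum>g\<in>F. smul (c g) g)}"

text \<open>Non-degeneracy over Z is read as: the adjoint A_i -> Hom(A_{d-i}, A_d) is bijective.\<close>
definition poincare_duality_algebra ::
  "chain set \<Rightarrow> (nat \<Rightarrow> chain set) \<Rightarrow> (chain \<Rightarrow> chain \<Rightarrow> chain) \<Rightarrow> chain \<Rightarrow> nat \<Rightarrow> bool" where
  "poincare_duality_algebra A Ak mult one d \<longleftrightarrow>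
     \<comment> \<open>graded abelian group\<close>
     (\<forall>k. Ak k \<subseteq> A \<and> 0 \<in> Ak k \<and> (\<forall>x\<in>Ak k. \<forall>y\<in>Ak k. x + y \<in> Ak k \<and> - x \<in> Ak k)) \<and>
     (\<forall>x\<in>A. \<exists>!xs. (\<forall>k. xs k \<in> Ak k) \<and> (\<forall>k>d. xs k = 0) \<and> x = (\<Sum>k\<le>d. xs k)) \<and>
     \<comment> \<open>unital associative Z-algebra\<close>
     (\<forall>x\<in>A. \<forall>y\<in>A. mult x y \<in> A) \<and>
     (\<forall>x\<in>A. \<forall>y\<in>A. \<forall>z\<in>A. mult (mult x y) z = mult x (mult y z)) \<and>
     (\<forall>x\<in>A. \<forall>y\<in>A. \<forall>z\<in>A. mult (x + y) z = mult x z + mult y z \<and> mult x (y + z) = mult x y + mult x z) \<and>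
     one \<in> A \<and> (\<forall>x\<in>A. mult one x = x \<and> mult x one = x) \<and>
     \<comment> \<open>graded and graded-commutative\<close>
     (\<forall>i j. \<forall>x\<in>Ak i. \<forall>y\<in>Ak j. mult x y \<in> Ak (i + j)) \<and>
     (\<forall>i j. \<forall>x\<in>Ak i. \<forall>y\<in>Ak j. mult x y = smul ((-1) ^ (i * j)) (mult y x)) \<and>
     \<comment> \<open>connected\<close>
     one \<noteq> 0 \<and> Ak 0 = range (\<lambda>k. smul k one) \<and>
     \<comment> \<open>finitely generated in each degree\<close>
     (\<forall>k. \<exists>G. finite G \<and> Ak k = span_Z G) \<and>
     \<comment> \<open>vanishing above d, rank one in degree d\<close>
     (\<forall>k>d. Ak k = {0}) \<and>
     (\<exists>g. g \<noteq> 0 \<and> Ak d = range (\<lambda>k. smul k g)) \<and>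
     \<comment> \<open>non-degenerate (perfect) pairing A_i x A_{d-i} -> A_d\<close>
     (\<forall>i\<le>d. \<forall>\<phi>. (\<forall>b\<in>Ak (d - i). \<phi> b \<in> Ak d) \<and>
                   (\<forall>b\<in>Ak (d - i). \<forall>b'\<in>Ak (d - i). \<phi> (b + b') = \<phi> b + \<phi> b')
               \<longrightarrow> (\<exists>!a. a \<in> Ak i \<and> (\<forall>b\<in>Ak (d - i). \<phi> b = mult a b)))"

end

theory Submission
  imports Defs
begin

lemma sum_fun_apply: "(sum f A) x = (\<Sum>a\<in>A. f a x)"
  by (induction A rule: infinite_finite_induct) auto

lemma smul_apply: "smul k c U = k * c U" by (simp add: smul_def)
lemma basis_apply: "basis S U = (if U = S then 1 else 0)" by (simp add: basis_def)

definition lin :: "(chain \<Rightarrow> chain) \<Rightarrow> bool" where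
  "lin L \<longleftrightarrow> (\<forall>x y. L (x + y) = L x + L y) \<and> (\<forall>k x. L (smul k x) = smul k (L x))"

lemma lin_zero: "lin L \<Longrightarrow> L 0 = 0"
proof -
  assume "lin L"
  have "(0::chain) = smul 0 0" by (simp add: fun_eq_iff smul_apply)
  hence "L 0 = smul 0 (L 0)" using \<open>lin L\<close> unfolding lin_def by metis
  thus ?thesis by (simp add: fun_eq_iff smul_apply)
qed

lemma lin_add: "lin L \<Longrightarrow> L (x + y) = L x + L y" by (simp add: lin_def)
lemma lin_smul: "lin L \<Longrightarrow> L (smul k x) = smul k (L x)" by (simp add: lin_def)

lemma lin_sum: "lin L \<Longrightarrow> L (sum g F) = (\<Sum>i\<in>F. L (g i))"
  by (induction F rule: infinite_finite_induct) (auto simp: lin_zero lin_add)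

lemma lin_sum_smul: "lin L \<Longrightarrow> L (\<Sum>i\<in>F. smul (k i) (g i)) = (\<Sum>i\<in>F. smul (k i) (L (g i)))"
  by (simp add: lin_sum lin_smul)

lemma smul_sum: "smul k (sum g F) = (\<Sum>i\<in>F. smul k (g i))"
  by (rule ext) (simp add: sum_fun_apply smul_apply sum_distrib_left)

lemma smul_smul: "smul k (smul l x) = smul (k * l) x" by (rule ext) (simp add: smul_apply)
lemma smul_add: "smul k (x + y) = smul k x + smul k y" by (rule ext) (simp add: smul_apply algebra_simps)
lemma smul_zero[simp]: "smul k 0 = 0" "smul 0 x = 0" by (auto simp: fun_eq_iff smul_apply)
lemma smul_one[simp]: "smul 1 x = x" by (auto simp: fun_eq_iff smul_apply)
lemma add_smul: "smul (k + l) x = smul k x + smul l x" by (rule ext) (simp add: smul_apply algebra_simps)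

lemma expand: "c \<in> nchains N \<Longrightarrow> c = (\<Sum>S\<in>Pow {..<N}. smul (c S) (basis S))"
proof (rule ext)
  fix U assume c: "c \<in> nchains N"
  have "(\<Sum>S\<in>Pow {..<N}. smul (c S) (basis S)) U = (\<Sum>S\<in>Pow {..<N}. if U = S then c U else 0)"
    by (simp add: sum_fun_apply smul_apply basis_apply if_distrib cong: if_cong)
  also have "\<dots> = c U" using c by (auto simp: nchains_def)
  finally show "c U = (\<Sum>S\<in>Pow {..<N}. smul (c S) (basis S)) U" by simp
qed

lemma lin_expand: "lin L \<Longrightarrow> c \<in> nchains N \<Longrightarrow> L c = (\<Sum>S\<in>Pow {..<N}. smul (c S) (L (basis S)))"
  by (subst expand, assumption) (simp add: lin_sum_smul)

lemma lin_join1: "lin (\<lambda>x. join N x y)"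
  unfolding lin_def join_def
  by (auto intro!: ext simp: sum_fun_apply smul_apply algebra_simps sum.distrib sum_distrib_left)

lemma lin_join2: "lin (join N x)"
  unfolding lin_def join_def
  by (auto intro!: ext simp: sum_fun_apply smul_apply algebra_simps sum.distrib sum_distrib_left)

lemma lin_bdry: "lin (bdry N)"
  unfolding lin_def bdry_def
  by (auto intro!: ext simp: sum_fun_apply smul_apply algebra_simps sum.distrib sum_distrib_left)

lemma lin_Nmap: "lin (Nmap M f)"
  unfolding lin_def Nmap_def
  by (auto intro!: ext simp: sum_fun_apply smul_apply algebra_simps sum.distrib sum_distrib_left)

lemma sum_basis_delta: "S \<in> P \<Longrightarrow> finite P \<Longrightarrow> (\<Sum>S'\<in>P. smul (basis S S') (g S')) = g S"
proof (rule ext)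
  fix x assume "S \<in> P" "finite P"
  have "(\<Sum>S'\<in>P. smul (basis S S') (g S')) x = (\<Sum>S'\<in>P. if S = S' then g S' x else 0)"
    by (auto simp: sum_fun_apply smul_apply basis_apply intro!: sum.cong)
  thus "(\<Sum>S'\<in>P. smul (basis S S') (g S')) x = g S x" using \<open>S \<in> P\<close> \<open>finite P\<close> by simp
qed

lemma join_basis_basis: "S \<in> Pow {..<N} \<Longrightarrow> T \<in> Pow {..<N} \<Longrightarrow> join N (basis S) (basis T) = join_basis S T"
  unfolding join_def
  by (simp add: smul_smul[symmetric] smul_sum[symmetric] sum_basis_delta)

lemma bdry_basis_eq: "S \<in> Pow {..<N} \<Longrightarrow> bdry N (basis S) = bdry_basis S"
  unfolding bdry_def by (simp add: sum_basis_delta)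

lemma Nmap_basis: "S \<in> Pow {..<M} \<Longrightarrow> Nmap M f (basis S) = (if inj_on f S then simplex (map f (sorted_list_of_set S)) else 0)"
  unfolding Nmap_def by (simp add: sum_basis_delta)

definition pos :: "nat \<Rightarrow> nat set \<Rightarrow> nat" where
  "pos v S = card {u\<in>S. u < v}"

definition cr :: "nat set \<Rightarrow> nat set \<Rightarrow> nat" where
  "cr S T = (\<Sum>s\<in>S. pos s T)"

lemma pos_nth:
  assumes "sorted_wrt (<) xs" "i < length xs"
  shows "pos (xs ! i) (set xs) = i"
proof -
  have d: "distinct xs" using assms(1) strict_sorted_iff by blast
  have A: "{u\<in>set xs. u < xs ! i} \<subseteq> (!) xs ` {..<i}"
  proof
    fix u assume "u \<in> {u\<in>set xs. u < xs ! i}"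
    hence u: "u \<in> set xs" "u < xs ! i" by auto
    then obtain k where k: "k < length xs" "u = xs ! k" by (auto simp: in_set_conv_nth)
    have "k < i"
    proof (rule ccontr)
      assume "\<not> k < i"
      hence "k = i \<or> i < k" by auto
      thus False using k assms u sorted_wrt_nth_less[of "(<)" xs i k] by auto
    qed
    thus "u \<in> (!) xs ` {..<i}" using k by auto
  qed
  have B: "(!) xs ` {..<i} \<subseteq> {u\<in>set xs. u < xs ! i}"
    using assms sorted_wrt_nth_less[of "(<)" xs _ i] by auto
  have "{u\<in>set xs. u < xs ! i} = (!) xs ` {..<i}" using A B by blast
  moreover have "inj_on ((!) xs) {..<i}" using d assms(2)
    by (intro inj_on_nth) auto
  ultimately show ?thesis unfolding pos_def by (simp add: card_image)
qed

lemma cr_card: "finite S \<Longrightarrow> finite T \<Longrightarrow> card {(s,t). s \<in> S \<and> t \<in> T \<and> t < s} = cr S T"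
proof -
  assume f: "finite S" "finite T"
  have "{(s,t). s \<in> S \<and> t \<in> T \<and> t < s} = Sigma S (\<lambda>s. {t\<in>T. t < s})" by auto
  thus ?thesis using f by (simp add: card_SigmaI cr_def pos_def)
qed

lemma inversions_append:
  assumes as: "sorted_wrt (<) as" and bs: "sorted_wrt (<) bs" and disj: "set as \<inter> set bs = {}"
  shows "inversions (as @ bs) = cr (set as) (set bs)"
proof -
  define xs where "xs = as @ bs"
  define la where "la = length as"
  define I where "I = {(i, j). i < j \<and> j < length xs \<and> xs ! j < xs ! i}"
  define P where "P = {(s,t). s \<in> set as \<and> t \<in> set bs \<and> t < s}"
  define h where "h = (\<lambda>(i,j). (xs ! i, xs ! j))"
  have d: "distinct xs" unfolding xs_def using as bs disj strict_sorted_iff by auto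
  have "h ` I \<subseteq> P"
  proof (rule image_subsetI)
    fix p assume "p \<in> I"
    then obtain i j where pij: "p = (i, j)" and ij: "(i, j) \<in> I" by (cases p) auto
    hence ij': "i < j" "j < length xs" "xs ! j < xs ! i" by (auto simp: I_def)
    have "\<not> j < la"
    proof
      assume "j < la"
      hence "xs ! i = as ! i" "xs ! j = as ! j" using ij' by (auto simp: xs_def la_def nth_append)
      thus False using ij' \<open>j < la\<close> sorted_wrt_nth_less[OF as, of i j] by (auto simp: la_def)
    qed
    moreover have "\<not> la \<le> i"
    proof
      assume "la \<le> i"
      hence "xs ! i = bs ! (i - la)" "xs ! j = bs ! (j - la)" using ij' by (auto simp: xs_def la_def nth_append)
      moreover have "j - la < length bs" using ij' \<open>la \<le> i\<close> by (auto simp: xs_def la_def)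
      moreover have "i - la < j - la" using ij' \<open>la \<le> i\<close> by arith
      ultimately show False using ij'(3) sorted_wrt_nth_less[OF bs, of "i - la" "j - la"] by auto
    qed
    ultimately have "xs ! i = as ! i" "xs ! j = bs ! (j - la)" "i < la" "j - la < length bs"
      using ij' by (auto simp: xs_def la_def nth_append)
    thus "h p \<in> P" using ij' pij by (auto simp: h_def P_def la_def)
  qed
  moreover have "P \<subseteq> h ` I"
  proof
    fix p assume "p \<in> P"
    then obtain s t where pst: "p = (s, t)" and "(s, t) \<in> P" by (cases p) auto
    hence st: "s \<in> set as" "t \<in> set bs" "t < s" by (auto simp: P_def)
    obtain i where i: "i < la" "s = as ! i" using st by (auto simp: in_set_conv_nth la_def)
    obtain k where k: "k < length bs" "t = bs ! k" using st by (auto simp: in_set_conv_nth)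
    have "xs ! i = s" "xs ! (la + k) = t" using i k by (auto simp: xs_def la_def nth_append)
    moreover have "(i, la + k) \<in> I" using i k st \<open>xs ! i = s\<close> \<open>xs ! (la + k) = t\<close>
      by (auto simp: I_def xs_def la_def)
    ultimately show "p \<in> h ` I" using pst by (force simp: h_def)
  qed
  ultimately have "h ` I = P" by blast
  moreover have "inj_on h I"
  proof (rule inj_onI)
    fix p q assume "p \<in> I" "q \<in> I" "h p = h q"
    thus "p = q" using d by (auto simp: h_def I_def nth_eq_iff_index_eq split: prod.splits)
  qed
  ultimately have "card I = card P" using card_image by metis
  thus ?thesis unfolding inversions_def
    by (simp add: I_def xs_def P_def cr_card)
qed

lemma cr_empty_right[simp]: "cr S {} = 0" by (simp add: cr_def pos_def)
lemma cr_empty_left[simp]: "cr {} T = 0" by (simp add: cr_def)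

lemma inversions_sorted: "sorted_wrt (<) xs \<Longrightarrow> inversions xs = 0"
  using inversions_append[of xs "[]"] by simp

lemma simplex_sorted: "sorted_wrt (<) xs \<Longrightarrow> simplex xs = basis (set xs)"
  by (simp add: simplex_def inversions_sorted strict_sorted_iff)

lemma simplex_sorted_set: "finite S \<Longrightarrow> simplex (sorted_list_of_set S) = basis S"
  by (simp add: simplex_sorted)

lemma join_basis_alt: "finite S \<Longrightarrow> finite T \<Longrightarrow>
   join_basis S T = (if S \<inter> T = {} then smul ((-1) ^ cr S T) (basis (S \<union> T)) else 0)"
  unfolding join_basis_def simplex_def
  by (simp add: inversions_append)

lemma bdry_basis_alt: "finite S \<Longrightarrow> bdry_basis S = (\<Sum>v\<in>S. smul ((-1) ^ pos v S) (basis (S - {v})))"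
proof -
  assume f: "finite S"
  define xs where "xs = sorted_list_of_set S"
  have xs: "sorted_wrt (<) xs" "set xs = S" "length xs = card S" "distinct xs"
    using f by (auto simp: xs_def)
  have bij: "bij_betw ((!) xs) {..<card S} S" using xs by (intro bij_betw_nth) auto
  have "bdry_basis S = (\<Sum>i<card S. smul ((-1) ^ pos (xs ! i) S) (basis (S - {xs ! i})))"
    unfolding bdry_basis_def xs_def[symmetric]
    by (intro sum.cong refl) (metis pos_nth xs(1,2,3) lessThan_iff)
  also have "\<dots> = (\<Sum>v\<in>S. smul ((-1) ^ pos v S) (basis (S - {v})))"
    using sum.reindex_bij_betw[OF bij, of "\<lambda>v. smul ((-1) ^ pos v S) (basis (S - {v}))"] by simp
  finally show ?thesis .
qed

lemma neg1_eq: "even (x + y) \<Longrightarrow> (-1::int) ^ x = (-1) ^ y"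
  by (auto simp: minus_one_power_iff)

lemma neg1_neq: "odd (x + y) \<Longrightarrow> (-1::int) ^ x = - ((-1) ^ y)"
  by (auto simp: minus_one_power_iff)

lemma pos_union: "finite A \<Longrightarrow> finite B \<Longrightarrow> A \<inter> B = {} \<Longrightarrow> pos v (A \<union> B) = pos v A + pos v B"
proof -
  assume f: "finite A" "finite B" "A \<inter> B = {}"
  have "{u \<in> A \<union> B. u < v} = {u\<in>A. u < v} \<union> {u\<in>B. u < v}" by auto
  thus ?thesis using f unfolding pos_def by (simp add: card_Un_disjoint disjoint_iff)
qed

lemma cr_union_left: "finite S1 \<Longrightarrow> finite S2 \<Longrightarrow> S1 \<inter> S2 = {} \<Longrightarrow> cr (S1 \<union> S2) T = cr S1 T + cr S2 T"
  unfolding cr_def by (simp add: sum.union_disjoint)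

lemma cr_union_right: "finite T1 \<Longrightarrow> finite T2 \<Longrightarrow> T1 \<inter> T2 = {} \<Longrightarrow> cr S (T1 \<union> T2) = cr S T1 + cr S T2"
  unfolding cr_def by (simp add: pos_union sum.distrib)

lemma cr_single_left: "cr {v} T = pos v T" by (simp add: cr_def)

lemma pos_single: "pos s {v} = (if v < s then 1 else 0)"
proof -
  have "{u\<in>{v}. u < s} = (if v < s then {v} else {})" by auto
  thus ?thesis unfolding pos_def by simp
qed

lemma cr_single_right: "finite S \<Longrightarrow> cr S {v} = card {s\<in>S. v < s}"
proof -
  assume "finite S"
  have "cr S {v} = (\<Sum>s\<in>S. if v < s then 1 else 0)"
    unfolding cr_def by (intro sum.cong refl) (simp add: pos_single)
  also have "\<dots> = card {s\<in>S. v < s}" using \<open>finite S\<close> by (simp add: sum.If_cases Int_def)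
  finally show ?thesis .
qed

lemma pos_compl: "finite S \<Longrightarrow> v \<notin> S \<Longrightarrow> pos v S + card {s\<in>S. v < s} = card S"
proof -
  assume f: "finite S" "v \<notin> S"
  have "S = {s\<in>S. s < v} \<union> {s\<in>S. v < s}" using f by (auto simp: not_less_iff_gr_or_eq)
  hence "card S = card ({s\<in>S. s < v} \<union> {s\<in>S. v < s})" by simp
  also have "\<dots> = pos v S + card {s\<in>S. v < s}" unfolding pos_def using f
    by (subst card_Un_disjoint) auto
  finally show ?thesis by simp
qed

lemma pos_remove_self: "finite S \<Longrightarrow> pos v (S - {v}) = pos v S"
  unfolding pos_def by (rule arg_cong[where f=card]) auto

lemma cr_comm: "finite S \<Longrightarrow> finite T \<Longrightarrow> S \<inter> T = {} \<Longrightarrow> cr S T + cr T S = card S * card T"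
proof (induction S rule: finite_induct)
  case empty thus ?case by (simp add: cr_def pos_def)
next
  case (insert a S)
  have "cr (insert a S) T = pos a T + cr S T"
    using insert cr_union_left[of "{a}" S T] by (simp add: cr_single_left)
  moreover have "cr T (insert a S) = cr T S + card {t\<in>T. a < t}"
    using insert cr_union_right[of "{a}" S T] cr_single_right[of T a] by (simp add: add.commute)
  moreover have "pos a T + card {t\<in>T. a < t} = card T" using insert by (intro pos_compl) auto
  ultimately show ?case using insert by simp
qed

lemma sum_single: "finite A \<Longrightarrow> w \<in> A \<Longrightarrow> (\<And>v. v \<in> A \<Longrightarrow> v \<noteq> w \<Longrightarrow> f v = 0) \<Longrightarrow> sum f A = f w"
  by (simp add: sum.remove sum.neutral)

lemma JS_eq:
  assumes "S \<subseteq> {..<N}" "T \<subseteq> {..<N}"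
  shows "join N (bdry_basis S) (basis T) = (\<Sum>v\<in>S. smul ((-1)^pos v S) (join_basis (S - {v}) T))"
proof -
  have "finite S" using assms finite_subset by blast
  hence "join N (bdry_basis S) (basis T) = (\<Sum>v\<in>S. smul ((-1)^pos v S) (join N (basis (S-{v})) (basis T)))"
    by (simp add: bdry_basis_alt lin_sum_smul[OF lin_join1])
  also have "\<dots> = (\<Sum>v\<in>S. smul ((-1)^pos v S) (join_basis (S - {v}) T))"
    using assms by (intro sum.cong refl arg_cong[where f="smul _"] join_basis_basis) auto
  finally show ?thesis .
qed

lemma JT_eq:
  assumes "S \<subseteq> {..<N}" "T \<subseteq> {..<N}"
  shows "join N (basis S) (bdry_basis T) = (\<Sum>v\<in>T. smul ((-1)^pos v T) (join_basis S (T - {v})))"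
proof -
  have "finite T" using assms finite_subset by blast
  hence "join N (basis S) (bdry_basis T) = (\<Sum>v\<in>T. smul ((-1)^pos v T) (join N (basis S) (basis (T-{v}))))"
    by (simp add: bdry_basis_alt lin_sum_smul[OF lin_join2])
  also have "\<dots> = (\<Sum>v\<in>T. smul ((-1)^pos v T) (join_basis S (T - {v})))"
    using assms by (intro sum.cong refl arg_cong[where f="smul _"] join_basis_basis) auto
  finally show ?thesis .
qed

lemma neg1_eq2: "x + y = 2 * k \<Longrightarrow> (-1::int) ^ x = (-1) ^ y"
  by (rule neg1_eq) simp

lemma neg1_neq2: "x + y + 1 = 2 * k \<Longrightarrow> (-1::int) ^ x = - ((-1) ^ y)"
proof -
  assume h: "x + y + 1 = 2 * k"
  have "even (x + y + 1)" unfolding h by simp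
  thus ?thesis by (intro neg1_neq) simp
qed

lemma sign1:
  assumes f: "finite S" "finite T" "S \<inter> T = {}" "v \<in> S"
  shows "(-1::int)^(cr S T + pos v (S \<union> T)) = (-1)^pos v S * (-1)^cr (S-{v}) T"
proof -
  have "cr S T = cr ((S-{v}) \<union> {v}) T" using f by (simp add: insert_absorb)
  also have "\<dots> = cr (S-{v}) T + pos v T" using f by (subst cr_union_left) (auto simp: cr_single_left)
  finally have e1: "cr S T = cr (S-{v}) T + pos v T" .
  have e2: "pos v (S \<union> T) = pos v S + pos v T" using f by (simp add: pos_union)
  show ?thesis unfolding power_add[symmetric]
    by (rule neg1_eq2[where k="cr (S-{v}) T + pos v T + pos v S"]) (simp add: e1 e2)
qed

lemma sign2:
  assumes f: "finite S" "finite T" "S \<inter> T = {}" "v \<in> T"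
  shows "(-1::int)^(cr S T + pos v (S \<union> T)) = (-1)^card S * ((-1)^pos v T * (-1)^cr S (T-{v}))"
proof -
  have "cr S T = cr S ((T-{v}) \<union> {v})" using f by (simp add: insert_absorb)
  also have "\<dots> = cr S (T-{v}) + card {s\<in>S. v < s}" using f by (subst cr_union_right) (auto simp: cr_single_right)
  finally have e1: "cr S T = cr S (T-{v}) + card {s\<in>S. v < s}" .
  have e2: "pos v (S \<union> T) = pos v S + pos v T" using f by (simp add: pos_union)
  have e3: "pos v S + card {s\<in>S. v < s} = card S" using f by (intro pos_compl) auto
  show ?thesis unfolding power_add[symmetric]
    by (rule neg1_eq2[where k="cr S (T-{v}) + card {s\<in>S. v < s} + pos v S + pos v T"]) (simp only: e1 e2 e3[symmetric]; simp)
qed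

lemma sign3:
  assumes f: "finite S" "finite T" "S \<inter> T = {w}"
  shows "(-1::int)^(pos w S + cr (S-{w}) T) = - ((-1)^card S * ((-1)^pos w T * (-1)^cr S (T-{w})))"
proof -
  have w: "w \<in> S" "w \<in> T" using f by auto
  have "cr (S-{w}) T = cr (S-{w}) ((T-{w}) \<union> {w})" using w by (simp add: insert_absorb)
  also have "\<dots> = cr (S-{w}) (T-{w}) + card {s\<in>S-{w}. w < s}" using f by (subst cr_union_right) (auto simp: cr_single_right)
  finally have e1: "cr (S-{w}) T = cr (S-{w}) (T-{w}) + card {s\<in>S-{w}. w < s}" .
  have e2: "pos w (S-{w}) + card {s\<in>S-{w}. w < s} = card (S-{w})" using f by (intro pos_compl) auto
  have e3: "card (S-{w}) + 1 = card S" by (metis card_Suc_Diff1 f(1) w(1) Suc_eq_plus1)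
  have "cr S (T-{w}) = cr ((S-{w}) \<union> {w}) (T-{w})" using w by (simp add: insert_absorb)
  also have "\<dots> = cr (S-{w}) (T-{w}) + pos w (T-{w})" using f by (subst cr_union_left) (auto simp: cr_single_left)
  finally have e4: "cr S (T-{w}) = cr (S-{w}) (T-{w}) + pos w T" using f by (simp add: pos_remove_self)
  have e5: "pos w (S-{w}) = pos w S" using f by (simp add: pos_remove_self)
  show ?thesis unfolding power_add[symmetric]
    by (rule neg1_neq2[where k="card S + cr (S-{w}) (T-{w}) + pos w T"]) (use e1 e2 e3 e4 e5 in arith)
qed

lemma leibniz_basis:
  assumes S: "S \<subseteq> {..<N}" and T: "T \<subseteq> {..<N}"
  shows "bdry N (join_basis S T) = join N (bdry_basis S) (basis T) + smul ((-1)^card S) (join N (basis S) (bdry_basis T))"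
proof -
  have fS: "finite S" and fT: "finite T" using S T finite_subset by blast+
  show ?thesis
  proof (cases "S \<inter> T = {}")
    case True
    have U: "S \<union> T \<in> Pow {..<N}" using S T by auto
    have "bdry N (join_basis S T) = (\<Sum>v\<in>S \<union> T. smul ((-1)^(cr S T + pos v (S \<union> T))) (basis (S \<union> T - {v})))"
      using True fS fT U by (simp add: join_basis_alt lin_smul[OF lin_bdry] bdry_basis_eq bdry_basis_alt smul_sum smul_smul power_add)
    also have "\<dots> = (\<Sum>v\<in>S. smul ((-1)^(cr S T + pos v (S \<union> T))) (basis (S \<union> T - {v})))
                   + (\<Sum>v\<in>T. smul ((-1)^(cr S T + pos v (S \<union> T))) (basis (S \<union> T - {v})))"
      using fS fT True by (rule sum.union_disjoint)
    also have "(\<Sum>v\<in>S. smul ((-1)^(cr S T + pos v (S \<union> T))) (basis (S \<union> T - {v}))) = join N (bdry_basis S) (basis T)"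
      unfolding JS_eq[OF S T]
    proof (intro sum.cong refl)
      fix v assume v: "v \<in> S"
      have "(S-{v}) \<inter> T = {}" using True by auto
      moreover have "S - {v} \<union> T = S \<union> T - {v}" using True v by auto
      ultimately show "smul ((-1)^(cr S T + pos v (S \<union> T))) (basis (S \<union> T - {v})) = smul ((-1)^pos v S) (join_basis (S - {v}) T)"
        using fS fT v True by (simp add: join_basis_alt smul_smul sign1)
    qed
    also have "(\<Sum>v\<in>T. smul ((-1)^(cr S T + pos v (S \<union> T))) (basis (S \<union> T - {v}))) = smul ((-1)^card S) (join N (basis S) (bdry_basis T))"
      unfolding JT_eq[OF S T] smul_sum
    proof (intro sum.cong refl)
      fix v assume v: "v \<in> T"
      have "S \<inter> (T-{v}) = {}" using True by auto
      moreover have "S \<union> (T - {v}) = S \<union> T - {v}" using True v by auto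
      ultimately show "smul ((-1)^(cr S T + pos v (S \<union> T))) (basis (S \<union> T - {v})) = smul ((-1)^card S) (smul ((-1)^pos v T) (join_basis S (T - {v})))"
        using fS fT v True by (simp add: join_basis_alt smul_smul sign2)
    qed
    finally show ?thesis .
  next
    case False
    have L: "bdry N (join_basis S T) = 0" using False fS fT by (simp add: join_basis_alt lin_zero[OF lin_bdry])
    show ?thesis
    proof (cases "\<exists>w. S \<inter> T = {w}")
      case True
      then obtain w where w: "S \<inter> T = {w}" by blast
      hence wS: "w \<in> S" and wT: "w \<in> T" by auto
      have JS: "join N (bdry_basis S) (basis T) = smul ((-1)^(pos w S + cr (S-{w}) T)) (basis (S \<union> T))"
      proof -
        have "(\<Sum>v\<in>S. smul ((-1)^pos v S) (join_basis (S-{v}) T)) = smul ((-1)^pos w S) (join_basis (S-{w}) T)"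
        proof (rule sum_single[OF fS wS])
          fix v assume "v \<in> S" "v \<noteq> w"
          hence "(S-{v}) \<inter> T \<noteq> {}" using w by auto
          thus "smul ((-1)^pos v S) (join_basis (S-{v}) T) = 0" using fS fT by (simp add: join_basis_alt)
        qed
        moreover have "(S-{w}) \<inter> T = {}" "S - {w} \<union> T = S \<union> T" using w by auto
        ultimately show ?thesis unfolding JS_eq[OF S T] using fS fT by (simp add: join_basis_alt smul_smul power_add)
      qed
      have JT: "join N (basis S) (bdry_basis T) = smul ((-1)^pos w T * (-1)^cr S (T-{w})) (basis (S \<union> T))"
      proof -
        have "(\<Sum>v\<in>T. smul ((-1)^pos v T) (join_basis S (T-{v}))) = smul ((-1)^pos w T) (join_basis S (T-{w}))"
        proof (rule sum_single[OF fT wT])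
          fix v assume "v \<in> T" "v \<noteq> w"
          hence "S \<inter> (T-{v}) \<noteq> {}" using w by auto
          thus "smul ((-1)^pos v T) (join_basis S (T-{v})) = 0" using fS fT by (simp add: join_basis_alt)
        qed
        moreover have "S \<inter> (T-{w}) = {}" "S \<union> (T - {w}) = S \<union> T" using w by auto
        ultimately show ?thesis unfolding JT_eq[OF S T] using fS fT by (simp add: join_basis_alt smul_smul)
      qed
      show ?thesis unfolding L JS JT smul_smul sign3[OF fS fT w] add_smul[symmetric] by simp
    next
      case False2: False
      have JS: "join N (bdry_basis S) (basis T) = 0" unfolding JS_eq[OF S T]
      proof (rule sum.neutral, intro ballI)
        fix v assume "v \<in> S"
        hence "(S-{v}) \<inter> T \<noteq> {}" using False False2 by blast
        thus "smul ((-1)^pos v S) (join_basis (S-{v}) T) = 0" using fS fT by (simp add: join_basis_alt)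
      qed
      have JT: "join N (basis S) (bdry_basis T) = 0" unfolding JT_eq[OF S T]
      proof (rule sum.neutral, intro ballI)
        fix v assume "v \<in> T"
        hence "S \<inter> (T-{v}) \<noteq> {}" using False False2 by blast
        thus "smul ((-1)^pos v T) (join_basis S (T-{v})) = 0" using fS fT by (simp add: join_basis_alt)
      qed
      show ?thesis unfolding L JS JT by simp
    qed
  qed
qed

lemma join_left_expand: "a \<in> nchains N \<Longrightarrow> join N a y = (\<Sum>S\<in>Pow {..<N}. smul (a S) (join N (basis S) y))"
  using lin_expand[OF lin_join1[of N y], of a N] by simp

lemma join_right_expand: "b \<in> nchains N \<Longrightarrow> join N x b = (\<Sum>T\<in>Pow {..<N}. smul (b T) (join N x (basis T)))"
  using lin_expand[OF lin_join2[of N x], of b N] by simp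

lemma join_expand: "a \<in> nchains N \<Longrightarrow> b \<in> nchains N \<Longrightarrow>
   join N a b = (\<Sum>S\<in>Pow {..<N}. smul (a S) (\<Sum>T\<in>Pow {..<N}. smul (b T) (join N (basis S) (basis T))))"
  by (simp add: join_left_expand join_right_expand)

lemma bdry_expand: "a \<in> nchains N \<Longrightarrow> bdry N a = (\<Sum>S\<in>Pow {..<N}. smul (a S) (bdry N (basis S)))"
  using lin_expand[OF lin_bdry] by simp

lemma leibniz:
  assumes a: "a \<in> hom N p" and b: "b \<in> nchains N"
  shows "bdry N (join N a b) = join N (bdry N a) b + smul ((-1) ^ p) (join N a (bdry N b))"
proof -
  define P where "P = Pow {..<N}"
  define c :: int where "c = (-1) ^ p"
  define X where "X = (\<lambda>S T. join N (bdry N (basis S)) (basis T))"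
  define Y where "Y = (\<lambda>S T. join N (basis S) (bdry N (basis T)))"
  have a': "a \<in> nchains N" using a by (simp add: hom_def)
  have "bdry N (join N a b) = (\<Sum>S\<in>P. smul (a S) (\<Sum>T\<in>P. smul (b T) (bdry N (join N (basis S) (basis T)))))"
    unfolding P_def using a' b by (simp add: join_expand lin_sum_smul[OF lin_bdry])
  also have "\<dots> = (\<Sum>S\<in>P. smul (a S) (\<Sum>T\<in>P. smul (b T) (X S T + smul c (Y S T))))"
  proof (intro sum.cong refl)
    fix S assume S: "S \<in> P"
    show "smul (a S) (\<Sum>T\<in>P. smul (b T) (bdry N (join N (basis S) (basis T)))) =
          smul (a S) (\<Sum>T\<in>P. smul (b T) (X S T + smul c (Y S T)))"
    proof (cases "a S = 0")
      case False
      hence "card S = p" using a by (auto simp: hom_def)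
      thus ?thesis using S unfolding X_def Y_def c_def P_def
        by (intro arg_cong[where f="smul (a S)"] sum.cong refl)
           (auto simp: join_basis_basis bdry_basis_eq leibniz_basis)
    qed simp
  qed
  also have "\<dots> = (\<Sum>S\<in>P. smul (a S) (\<Sum>T\<in>P. smul (b T) (X S T))) + smul c (\<Sum>S\<in>P. smul (a S) (\<Sum>T\<in>P. smul (b T) (Y S T)))"
    by (simp add: smul_add smul_sum sum.distrib smul_smul mult_ac)
  also have "(\<Sum>S\<in>P. smul (a S) (\<Sum>T\<in>P. smul (b T) (X S T))) = join N (bdry N a) b"
  proof -
    have "join N (bdry N a) b = (\<Sum>S\<in>P. smul (a S) (join N (bdry N (basis S)) b))"
      unfolding P_def bdry_expand[OF a'] by (rule lin_sum_smul[OF lin_join1])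
    also have "\<dots> = (\<Sum>S\<in>P. smul (a S) (\<Sum>T\<in>P. smul (b T) (X S T)))"
      unfolding X_def P_def join_right_expand[OF b] ..
    finally show ?thesis by simp
  qed
  also have "(\<Sum>S\<in>P. smul (a S) (\<Sum>T\<in>P. smul (b T) (Y S T))) = join N a (bdry N b)"
  proof -
    have "join N a (bdry N b) = (\<Sum>S\<in>P. smul (a S) (join N (basis S) (bdry N b)))"
      unfolding P_def join_left_expand[OF a'] ..
    also have "\<dots> = (\<Sum>S\<in>P. smul (a S) (\<Sum>T\<in>P. smul (b T) (Y S T)))"
      unfolding Y_def P_def bdry_expand[OF b] lin_sum_smul[OF lin_join2] ..
    finally show ?thesis by simp
  qed
  finally show ?thesis unfolding c_def .
qed

lemma smap_strict:
  assumes f: "simplex_map M N f" and S: "S \<subseteq> {..<M}" and inj: "inj_on f S"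
    and x: "x \<in> S" and y: "y \<in> S"
  shows "x < y \<longleftrightarrow> f x < f y"
proof
  assume "x < y"
  hence "f x \<le> f y" using f S y by (auto simp: simplex_map_def)
  moreover have "f x \<noteq> f y" using inj x y \<open>x < y\<close> by (metis inj_on_def less_irrefl)
  ultimately show "f x < f y" by simp
next
  assume "f x < f y"
  show "x < y"
  proof (rule ccontr)
    assume "\<not> x < y"
    hence "f y \<le> f x" using f S x by (auto simp: simplex_map_def)
    thus False using \<open>f x < f y\<close> by simp
  qed
qed

lemma smap_range: "simplex_map M N f \<Longrightarrow> S \<subseteq> {..<M} \<Longrightarrow> f ` S \<subseteq> {..<N}"
  by (auto simp: simplex_map_def)

lemma Nmap_basis':
  assumes f: "simplex_map M N f" and S: "S \<subseteq> {..<M}"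
  shows "Nmap M f (basis S) = (if inj_on f S then basis (f ` S) else 0)"
proof (cases "inj_on f S")
  case True
  define xs where "xs = sorted_list_of_set S"
  have fS: "finite S" using S finite_subset by blast
  have xs: "sorted_wrt (<) xs" "set xs = S" using fS by (auto simp: xs_def)
  have "sorted_wrt (<) (map f xs)"
    unfolding sorted_wrt_map
    by (rule sorted_wrt_mono_rel[OF _ xs(1)]) (use smap_strict[OF f S True] xs(2) in blast)
  hence "simplex (map f xs) = basis (f ` S)" using xs by (simp add: simplex_sorted)
  thus ?thesis using S True by (simp add: Nmap_basis xs_def)
qed (use S in \<open>simp add: Nmap_basis\<close>)

lemma cr_image:
  assumes f: "simplex_map M N f" and S: "S \<subseteq> {..<M}" and T: "T \<subseteq> {..<M}" and inj: "inj_on f (S \<union> T)"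
  shows "cr (f ` S) (f ` T) = cr S T"
proof -
  have fS: "finite S" and fT: "finite T" using S T finite_subset by blast+
  have U: "S \<union> T \<subseteq> {..<M}" using S T by auto
  define h where "h = (\<lambda>(s::nat, t::nat). (f s, f t))"
  define X where "X = {(s,t). s \<in> S \<and> t \<in> T \<and> t < s}"
  define Y where "Y = {(s,t). s \<in> f ` S \<and> t \<in> f ` T \<and> t < s}"
  have A: "h ` X \<subseteq> Y"
  proof (rule image_subsetI)
    fix p assume "p \<in> X"
    then obtain s t where st: "p = (s,t)" "s \<in> S" "t \<in> T" "t < s" by (auto simp: X_def)
    hence "f t < f s" using smap_strict[OF f U inj, of t s] by auto
    thus "h p \<in> Y" using st by (auto simp: h_def Y_def)
  qed
  have B: "Y \<subseteq> h ` X"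
  proof
    fix q assume "q \<in> Y"
    then obtain s t where st: "q = (f s, f t)" "s \<in> S" "t \<in> T" "f t < f s" by (auto simp: Y_def)
    hence "t < s" using smap_strict[OF f U inj, of t s] by auto
    hence "(s, t) \<in> X" using st by (auto simp: X_def)
    thus "q \<in> h ` X" using st by (force simp: h_def)
  qed
  have hX: "h ` X = Y" using A B by blast
  have "inj_on h X"
  proof (rule inj_onI)
    fix p q assume p: "p \<in> X" and q: "q \<in> X" and e: "h p = h q"
    obtain s t where st: "p = (s, t)" "s \<in> S" "t \<in> T" using p by (auto simp: X_def)
    obtain s' t' where st': "q = (s', t')" "s' \<in> S" "t' \<in> T" using q by (auto simp: X_def)
    have "f s = f s'" "f t = f t'" using e st st' by (auto simp: h_def)
    hence "s = s'" "t = t'" using inj st st' by (auto dest: inj_onD)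
    thus "p = q" using st st' by simp
  qed
  hence "card Y = card X" using hX card_image by blast
  thus ?thesis using fS fT unfolding X_def Y_def by (simp add: cr_card)
qed

lemma natural_basis:
  assumes f: "simplex_map M N f" and S: "S \<subseteq> {..<M}" and T: "T \<subseteq> {..<M}"
  shows "Nmap M f (join_basis S T) = join N (Nmap M f (basis S)) (Nmap M f (basis T))"
proof -
  have fS: "finite S" and fT: "finite T" using S T finite_subset by blast+
  have U: "S \<union> T \<subseteq> {..<M}" using S T by auto
  have fS': "f ` S \<subseteq> {..<N}" and fT': "f ` T \<subseteq> {..<N}" using smap_range[OF f] S T by auto
  have R: "join N (Nmap M f (basis S)) (Nmap M f (basis T)) =
      (if inj_on f S \<and> inj_on f T then join_basis (f ` S) (f ` T) else 0)"
    using fS' fT' by (simp add: Nmap_basis'[OF f S] Nmap_basis'[OF f T] join_basis_basis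
        lin_zero[OF lin_join1] lin_zero[OF lin_join2])
  show ?thesis
  proof (cases "S \<inter> T = {}")
    case False
    have "f ` S \<inter> f ` T \<noteq> {}" using False by auto
    thus ?thesis using False fS fT unfolding R
      by (simp add: join_basis_alt lin_zero[OF lin_Nmap])
  next
    case True
    have L: "Nmap M f (join_basis S T) = smul ((-1) ^ cr S T) (if inj_on f (S \<union> T) then basis (f ` (S \<union> T)) else 0)"
      using True fS fT by (simp add: join_basis_alt lin_smul[OF lin_Nmap] Nmap_basis'[OF f U])
    show ?thesis
    proof (cases "inj_on f (S \<union> T)")
      case True2: True
      have "inj_on f S" "inj_on f T" by (rule inj_on_subset[OF True2], blast)+
      moreover have "f ` S \<inter> f ` T = {}" using True2 True by (auto simp: inj_on_def)
      ultimately show ?thesis unfolding L R using True2 fS fT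
        by (simp add: join_basis_alt cr_image[OF f S T True2] image_Un)
    next
      case False2: False
      have "\<not> (inj_on f S \<and> inj_on f T) \<or> f ` S \<inter> f ` T \<noteq> {}"
      proof (rule ccontr)
        assume "\<not> ?thesis"
        hence "inj_on f S" "inj_on f T" "f ` S \<inter> f ` T = {}" by auto
        hence "inj_on f (S \<union> T)" unfolding inj_on_Un by blast
        thus False using False2 by simp
      qed
      hence "(if inj_on f S \<and> inj_on f T then join_basis (f ` S) (f ` T) else 0) = 0"
        using fS fT by (auto simp: join_basis_alt)
      thus ?thesis unfolding L R using False2 by simp
    qed
  qed
qed

lemma natural:
  assumes f: "simplex_map M N f" and a: "a \<in> nchains M" and b: "b \<in> nchains M"
  shows "Nmap M f (join M a b) = join N (Nmap M f a) (Nmap M f b)"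
proof -
  define P where "P = Pow {..<M}"
  have "Nmap M f (join M a b) = (\<Sum>S\<in>P. smul (a S) (\<Sum>T\<in>P. smul (b T) (Nmap M f (join M (basis S) (basis T)))))"
    unfolding P_def join_expand[OF a b] lin_sum_smul[OF lin_Nmap] ..
  also have "\<dots> = (\<Sum>S\<in>P. smul (a S) (\<Sum>T\<in>P. smul (b T) (join N (Nmap M f (basis S)) (Nmap M f (basis T)))))"
    unfolding P_def
  proof (intro sum.cong refl arg_cong[where f="smul _"])
    fix S T assume "S \<in> Pow {..<M}" "T \<in> Pow {..<M}"
    thus "Nmap M f (join M (basis S) (basis T)) = join N (Nmap M f (basis S)) (Nmap M f (basis T))"
      using join_basis_basis[of S M T] natural_basis[OF f, of S T] by simp
  qed
  also have "\<dots> = join N (Nmap M f a) (Nmap M f b)"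
  proof -
    have "join N (Nmap M f a) (Nmap M f b) = (\<Sum>S\<in>P. smul (a S) (join N (Nmap M f (basis S)) (Nmap M f b)))"
      unfolding P_def lin_expand[OF lin_Nmap a] lin_sum_smul[OF lin_join1] ..
    also have "\<dots> = (\<Sum>S\<in>P. smul (a S) (\<Sum>T\<in>P. smul (b T) (join N (Nmap M f (basis S)) (Nmap M f (basis T)))))"
      unfolding P_def lin_expand[OF lin_Nmap b] lin_sum_smul[OF lin_join2] ..
    finally show ?thesis by simp
  qed
  finally show ?thesis .
qed

lemma join_apply: "join N x y U = (\<Sum>S\<in>Pow {..<N}. \<Sum>T\<in>Pow {..<N}. x S * y T * join_basis S T U)"
  by (simp add: join_def sum_fun_apply smul_apply)

lemma fin_sub: "S \<subseteq> {..<(N::nat)} \<Longrightarrow> finite S"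
  by (rule finite_subset) auto

lemma fin_pow: "S \<in> Pow {..<(N::nat)} \<Longrightarrow> finite S"
  by (rule finite_subset) auto

lemma join_basis_nz: "finite S \<Longrightarrow> finite T \<Longrightarrow> join_basis S T U \<noteq> 0 \<Longrightarrow> S \<inter> T = {} \<and> U = S \<union> T"
  by (auto simp: join_basis_alt smul_apply basis_apply split: if_splits)

lemma join_nz:
  assumes "join N x y U \<noteq> 0"
  shows "\<exists>S T. S \<subseteq> {..<N} \<and> T \<subseteq> {..<N} \<and> x S \<noteq> 0 \<and> y T \<noteq> 0 \<and> S \<inter> T = {} \<and> U = S \<union> T"
proof -
  obtain S where S: "S \<in> Pow {..<N}" and "(\<Sum>T\<in>Pow {..<N}. x S * y T * join_basis S T U) \<noteq> 0"
    using assms unfolding join_apply by (meson sum.neutral)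
  then obtain T where T: "T \<in> Pow {..<N}" and nz: "x S * y T * join_basis S T U \<noteq> 0"
    by (meson sum.neutral)
  have "finite S" "finite T" using S T by (auto intro: fin_pow)
  thus ?thesis using S T nz join_basis_nz[of S T U] by (intro exI[of _ S] exI[of _ T]) auto
qed

lemma join_nchains: "join N x y \<in> nchains N"
  unfolding nchains_def using join_nz by blast

lemma join_hom: "x \<in> hom N i \<Longrightarrow> y \<in> hom N j \<Longrightarrow> join N x y \<in> hom N (i + j)"
proof -
  assume x: "x \<in> hom N i" and y: "y \<in> hom N j"
  have "card U = i + j" if nz: "join N x y U \<noteq> 0" for U
  proof -
    obtain S T where ST: "S \<subseteq> {..<N}" "T \<subseteq> {..<N}" "x S \<noteq> 0" "y T \<noteq> 0" "S \<inter> T = {}" "U = S \<union> T"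
      using join_nz[OF nz] by blast
    have "card S = i" "card T = j" using x y ST by (auto simp: hom_def)
    moreover have "finite S" "finite T" using ST by (auto intro: fin_sub)
    ultimately show ?thesis using ST by (simp add: card_Un_disjoint)
  qed
  thus ?thesis using join_nchains by (auto simp: hom_def)
qed

lemma hom_nchains: "x \<in> hom N k \<Longrightarrow> x \<in> nchains N" by (simp add: hom_def)

lemma hom_zero: "0 \<in> hom N k" by (simp add: hom_def nchains_def)
lemma hom_add: "x \<in> hom N k \<Longrightarrow> y \<in> hom N k \<Longrightarrow> x + y \<in> hom N k"
  by (auto simp: hom_def nchains_def) (metis add.left_neutral add.right_neutral lessThan_iff subsetD)+
lemma hom_uminus: "x \<in> hom N k \<Longrightarrow> - x \<in> hom N k"
  by (auto simp: hom_def nchains_def)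
lemma hom_smul: "x \<in> hom N k \<Longrightarrow> smul c x \<in> hom N k"
  by (auto simp: hom_def nchains_def smul_apply)
lemma hom_sum: "(\<And>i. i \<in> F \<Longrightarrow> g i \<in> hom N k) \<Longrightarrow> sum g F \<in> hom N k"
  by (induction F rule: infinite_finite_induct) (auto intro: hom_zero hom_add)
lemma hom_basis: "S \<subseteq> {..<N} \<Longrightarrow> basis S \<in> hom N (card S)"
  by (auto simp: hom_def nchains_def basis_apply split: if_splits)

lemma join_basis_empty_left: "finite T \<Longrightarrow> join_basis {} T = basis T"
  by (simp add: join_basis_alt)
lemma join_basis_empty_right: "finite S \<Longrightarrow> join_basis S {} = basis S"
  by (simp add: join_basis_alt)

lemma unit_left: "x \<in> nchains N \<Longrightarrow> join N (basis {}) x = x"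
proof -
  assume x: "x \<in> nchains N"
  have "join N (basis {}) x = (\<Sum>T\<in>Pow {..<N}. smul (x T) (join N (basis {}) (basis T)))"
    using join_right_expand[OF x] .
  also have "\<dots> = (\<Sum>T\<in>Pow {..<N}. smul (x T) (basis T))"
    by (intro sum.cong refl) (auto simp: join_basis_basis join_basis_empty_left fin_pow)
  finally show ?thesis using expand[OF x] by simp
qed

lemma unit_right: "x \<in> nchains N \<Longrightarrow> join N x (basis {}) = x"
proof -
  assume x: "x \<in> nchains N"
  have "join N x (basis {}) = (\<Sum>T\<in>Pow {..<N}. smul (x T) (join N (basis T) (basis {})))"
    using join_left_expand[OF x] .
  also have "\<dots> = (\<Sum>T\<in>Pow {..<N}. smul (x T) (basis T))"
    by (intro sum.cong refl) (auto simp: join_basis_basis join_basis_empty_right fin_pow)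
  finally show ?thesis using expand[OF x] by simp
qed

lemma assoc_basis:
  assumes S: "S \<subseteq> {..<N}" and T: "T \<subseteq> {..<N}" and U: "U \<subseteq> {..<N}"
  shows "join N (join_basis S T) (basis U) = join N (basis S) (join_basis T U)"
proof -
  have f: "finite S" "finite T" "finite U" using S T U by (auto intro: fin_sub)
  have L: "join N (join_basis S T) (basis U) =
     (if S \<inter> T = {} \<and> (S \<union> T) \<inter> U = {} then smul ((-1)^(cr S T + cr (S \<union> T) U)) (basis (S \<union> T \<union> U)) else 0)"
    using f S T U by (simp add: join_basis_alt lin_smul[OF lin_join1] lin_zero[OF lin_join1] join_basis_basis
        smul_smul power_add)
  have R: "join N (basis S) (join_basis T U) =
     (if T \<inter> U = {} \<and> S \<inter> (T \<union> U) = {} then smul ((-1)^(cr T U + cr S (T \<union> U))) (basis (S \<union> (T \<union> U))) else 0)"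
    using f S T U by (simp add: join_basis_alt lin_smul[OF lin_join2] lin_zero[OF lin_join2] join_basis_basis
        smul_smul power_add)
  show ?thesis
  proof (cases "S \<inter> T = {} \<and> (S \<union> T) \<inter> U = {}")
    case True
    hence "cr S T + cr (S \<union> T) U = cr T U + cr S (T \<union> U)"
      using f by (simp add: cr_union_left cr_union_right Int_Un_distrib Int_Un_distrib2)
    moreover have "T \<inter> U = {} \<and> S \<inter> (T \<union> U) = {}" using True by auto
    ultimately show ?thesis unfolding L R using True by (simp add: Un_assoc)
  next
    case False
    hence F2: "\<not> (T \<inter> U = {} \<and> S \<inter> (T \<union> U) = {})" by auto
    show ?thesis unfolding L R if_not_P[OF False] if_not_P[OF F2] ..
  qed
qed

lemma assoc:
  assumes x: "x \<in> nchains N" and y: "y \<in> nchains N" and z: "z \<in> nchains N"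
  shows "join N (join N x y) z = join N x (join N y z)"
proof -
  define P where "P = Pow {..<N}"
  have "join N (join N x y) z = (\<Sum>S\<in>P. smul (x S) (\<Sum>T\<in>P. smul (y T) (join N (join N (basis S) (basis T)) z)))"
    unfolding P_def join_expand[OF x y] lin_sum_smul[OF lin_join1] ..
  also have "\<dots> = (\<Sum>S\<in>P. smul (x S) (\<Sum>T\<in>P. smul (y T) (\<Sum>U\<in>P. smul (z U) (join N (join N (basis S) (basis T)) (basis U)))))"
    unfolding P_def join_right_expand[OF z] ..
  also have "\<dots> = (\<Sum>S\<in>P. smul (x S) (\<Sum>T\<in>P. smul (y T) (\<Sum>U\<in>P. smul (z U) (join N (basis S) (join N (basis T) (basis U))))))"
    unfolding P_def
    by (intro sum.cong refl arg_cong[where f="smul _"]) (simp add: join_basis_basis assoc_basis)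
  also have "\<dots> = join N x (join N y z)"
  proof -
    have "join N x (join N y z) = (\<Sum>S\<in>P. smul (x S) (join N (basis S) (join N y z)))"
      unfolding P_def join_left_expand[OF x] ..
    also have "\<dots> = (\<Sum>S\<in>P. smul (x S) (\<Sum>T\<in>P. smul (y T) (\<Sum>U\<in>P. smul (z U) (join N (basis S) (join N (basis T) (basis U))))))"
      unfolding P_def join_expand[OF y z] lin_sum_smul[OF lin_join2] ..
    finally show ?thesis by simp
  qed
  finally show ?thesis .
qed

lemma comm_basis:
  assumes S: "S \<subseteq> {..<N}" and T: "T \<subseteq> {..<N}"
  shows "join_basis S T = smul ((-1)^(card S * card T)) (join_basis T S)"
proof -
  have f: "finite S" "finite T" using S T by (auto intro: fin_sub)
  show ?thesis
  proof (cases "S \<inter> T = {}")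
    case True
    have "cr S T + cr T S = card S * card T" using cr_comm f True by blast
    hence "(-1::int)^cr S T = (-1)^(card S * card T) * (-1)^cr T S"
      unfolding power_add[symmetric] by (intro neg1_eq2[where k="cr S T + cr T S"]) simp
    thus ?thesis using True f by (simp add: join_basis_alt smul_smul Un_commute Int_commute)
  next
    case False
    thus ?thesis using f by (simp add: join_basis_alt Int_commute)
  qed
qed

lemma join_expand_basis: "a \<in> nchains N \<Longrightarrow> b \<in> nchains N \<Longrightarrow>
   join N a b = (\<Sum>S\<in>Pow {..<N}. \<Sum>T\<in>Pow {..<N}. smul (a S * b T) (join_basis S T))"
  unfolding join_expand by (auto simp: smul_sum smul_smul join_basis_basis intro!: sum.cong)

lemma comm:
  assumes x: "x \<in> hom N i" and y: "y \<in> hom N j"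
  shows "join N x y = smul ((-1)^(i * j)) (join N y x)"
proof -
  define P where "P = Pow {..<N}"
  have x': "x \<in> nchains N" and y': "y \<in> nchains N" using x y by (auto simp: hom_def)
  have "smul ((-1)^(i * j)) (join N y x) = (\<Sum>T\<in>P. \<Sum>S\<in>P. smul ((-1)^(i * j)) (smul (y T * x S) (join_basis T S)))"
    unfolding P_def join_expand_basis[OF y' x'] by (simp add: smul_sum)
  also have "\<dots> = (\<Sum>S\<in>P. \<Sum>T\<in>P. smul ((-1)^(i * j)) (smul (y T * x S) (join_basis T S)))"
    by (rule sum.swap)
  also have "\<dots> = (\<Sum>S\<in>P. \<Sum>T\<in>P. smul (x S * y T) (join_basis S T))"
  proof (intro sum.cong refl)
    fix S T assume S: "S \<in> P" and T: "T \<in> P"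
    show "smul ((-1)^(i * j)) (smul (y T * x S) (join_basis T S)) = smul (x S * y T) (join_basis S T)"
    proof (cases "x S = 0 \<or> y T = 0")
      case False
      hence "card S = i" "card T = j" using x y by (auto simp: hom_def)
      thus ?thesis using comm_basis[of S N T] S T unfolding P_def by (simp add: smul_smul mult_ac)
    qed auto
  qed
  also have "\<dots> = join N x y" unfolding P_def join_expand_basis[OF x' y'] ..
  finally show ?thesis ..
qed

lemma expand_hom: "x \<in> hom N k \<Longrightarrow> x = (\<Sum>S\<in>{S\<in>Pow {..<N}. card S = k}. smul (x S) (basis S))"
proof -
  assume x: "x \<in> hom N k"
  have "x = (\<Sum>S\<in>Pow {..<N}. smul (x S) (basis S))" using expand x by (auto simp: hom_def)
  also have "\<dots> = (\<Sum>S\<in>{S\<in>Pow {..<N}. card S = k}. smul (x S) (basis S))"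
  proof (rule sum.mono_neutral_right)
    show "\<forall>S\<in>Pow {..<N} - {S \<in> Pow {..<N}. card S = k}. smul (x S) (basis S) = 0"
      using x by (auto simp: hom_def) (metis smul_zero(2))
  qed auto
  finally show ?thesis .
qed

lemma basis_nz: "basis S \<noteq> 0"
proof
  assume "basis S = 0"
  hence "basis S S = 0" by simp
  thus False by (simp add: basis_apply)
qed

lemma basis_inj: "basis S = basis T \<Longrightarrow> S = T"
  by (metis basis_apply zero_neq_one)

lemma hom_big: "k > N \<Longrightarrow> hom N k = {0}"
proof -
  assume k: "k > N"
  have "x = 0" if x: "x \<in> hom N k" for x
  proof (rule ext)
    fix U have "x U = 0"
    proof (rule ccontr)
      assume "x U \<noteq> 0"
      hence "U \<subseteq> {..<N}" "card U = k" using x by (auto simp: hom_def nchains_def)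
      hence "k \<le> N" using card_mono[of "{..<N}" U] by auto
      thus False using k by simp
    qed
    thus "x U = 0 U" by simp
  qed
  thus ?thesis using hom_zero by blast
qed

lemma hom_0: "hom N 0 = range (\<lambda>k. smul k (basis {}))"
proof
  show "hom N 0 \<subseteq> range (\<lambda>k. smul k (basis {}))"
  proof
    fix x assume x: "x \<in> hom N 0"
    have "x = smul (x {}) (basis {})"
    proof (rule ext)
      fix U show "x U = smul (x {}) (basis {}) U"
      proof (cases "x U = 0")
        case False
        hence "U \<subseteq> {..<N}" "card U = 0" using x by (auto simp: hom_def nchains_def)
        hence "U = {}" using fin_sub by auto
        thus ?thesis by (simp add: smul_apply basis_apply)
      qed (auto simp: smul_apply basis_apply)
    qed
    thus "x \<in> range (\<lambda>k. smul k (basis {}))" by blast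
  qed
  show "range (\<lambda>k. smul k (basis {})) \<subseteq> hom N 0"
    using hom_basis[of "{}" N] hom_smul by auto
qed

lemma hom_top: "hom N N = range (\<lambda>k. smul k (basis {..<N}))"
proof
  show "hom N N \<subseteq> range (\<lambda>k. smul k (basis {..<N}))"
  proof
    fix x assume x: "x \<in> hom N N"
    have "x = smul (x {..<N}) (basis {..<N})"
    proof (rule ext)
      fix U show "x U = smul (x {..<N}) (basis {..<N}) U"
      proof (cases "x U = 0")
        case False
        hence "U \<subseteq> {..<N}" "card U = N" using x by (auto simp: hom_def nchains_def)
        hence "U = {..<N}" using card_subset_eq[of "{..<N}" U] by auto
        thus ?thesis by (simp add: smul_apply basis_apply)
      qed (auto simp: smul_apply basis_apply)
    qed
    thus "x \<in> range (\<lambda>k. smul k (basis {..<N}))" by blast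
  qed
  show "range (\<lambda>k. smul k (basis {..<N})) \<subseteq> hom N N"
    using hom_basis[of "{..<N}" N] hom_smul by auto
qed

lemma hom_span: "hom N k = span_Z (basis ` {S\<in>Pow {..<N}. card S = k})"
proof
  define PK where "PK = {S\<in>Pow {..<N}. card S = k}"
  have inj: "inj_on basis PK" by (meson basis_inj inj_onI)
  show "hom N k \<subseteq> span_Z (basis ` {S\<in>Pow {..<N}. card S = k})"
  proof
    fix x assume x: "x \<in> hom N k"
    define c where "c = (\<lambda>g. x (the_inv_into PK basis g))"
    have "(\<Sum>g\<in>basis ` PK. smul (c g) g) = (\<Sum>S\<in>PK. smul (c (basis S)) (basis S))"
      by (rule sum.reindex[OF inj, unfolded comp_def])
    also have "\<dots> = (\<Sum>S\<in>PK. smul (x S) (basis S))"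
      by (intro sum.cong refl) (simp add: c_def the_inv_into_f_f[OF inj])
    also have "\<dots> = x" using expand_hom[OF x] unfolding PK_def by simp
    finally have "x = (\<Sum>g\<in>basis ` PK. smul (c g) g)" by simp
    moreover have "finite (basis ` PK)" unfolding PK_def by simp
    ultimately show "x \<in> span_Z (basis ` {S\<in>Pow {..<N}. card S = k})"
      unfolding span_Z_def PK_def by blast
  qed
  show "span_Z (basis ` {S\<in>Pow {..<N}. card S = k}) \<subseteq> hom N k"
  proof
    fix x assume "x \<in> span_Z (basis ` {S\<in>Pow {..<N}. card S = k})"
    then obtain F c where F: "F \<subseteq> basis ` {S\<in>Pow {..<N}. card S = k}" and x: "x = (\<Sum>g\<in>F. smul (c g) g)"
      unfolding span_Z_def by blast
    have "g \<in> hom N k" if "g \<in> F" for g using F that hom_basis by blast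
    thus "x \<in> hom N k" unfolding x by (intro hom_sum hom_smul) auto
  qed
qed

lemma sum_hom_apply:
  assumes ys: "\<forall>k. ys k \<in> hom N k"
  shows "(\<Sum>k\<le>N. ys k) U = (if card U \<le> N then ys (card U) U else 0)"
proof -
  have "(\<Sum>k\<le>N. ys k) U = (\<Sum>k\<le>N. if card U = k then ys k U else 0)"
    unfolding sum_fun_apply
  proof (intro sum.cong refl)
    fix k show "ys k U = (if card U = k then ys k U else 0)"
      using ys by (auto simp: hom_def)
  qed
  also have "\<dots> = (if card U \<le> N then ys (card U) U else 0)" by simp
  finally show ?thesis .
qed

lemma nchains_card: "x \<in> nchains N \<Longrightarrow> N < card U \<Longrightarrow> x U = 0"
proof (rule ccontr)
  assume "x \<in> nchains N" "N < card U" "x U \<noteq> 0"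
  hence "U \<subseteq> {..<N}" by (auto simp: nchains_def)
  hence "card U \<le> N" using card_mono[of "{..<N}" U] by auto
  thus False using \<open>N < card U\<close> by simp
qed

lemma decomp:
  assumes x: "x \<in> nchains N"
  shows "\<exists>!xs. (\<forall>k. xs k \<in> hom N k) \<and> (\<forall>k>N. xs k = 0) \<and> x = (\<Sum>k\<le>N. xs k)"
proof -
  define xs0 where "xs0 = (\<lambda>k U. if card U = k then x U else 0)"
  have h0: "\<forall>k. xs0 k \<in> hom N k" using x by (auto simp: xs0_def hom_def nchains_def)
  have z0: "\<forall>k>N. xs0 k = 0" using nchains_card[OF x] by (auto simp: xs0_def fun_eq_iff)
  have s0: "x = (\<Sum>k\<le>N. xs0 k)"
  proof (rule ext)
    fix U show "x U = (\<Sum>k\<le>N. xs0 k) U"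
      unfolding sum_hom_apply[OF h0] using nchains_card[OF x, of U] by (auto simp: xs0_def)
  qed
  have uniq: "ys = xs0" if ys: "\<forall>k. ys k \<in> hom N k" "\<forall>k>N. ys k = 0" "x = (\<Sum>k\<le>N. ys k)" for ys
  proof (rule ext, rule ext)
    fix k U
    show "ys k U = xs0 k U"
    proof (cases "card U = k")
      case True
      show ?thesis
      proof (cases "k \<le> N")
        case True2: True
        have "x U = ys k U" using ys(3) sum_hom_apply[OF ys(1), of U] True True2 by simp
        thus ?thesis using True by (simp add: xs0_def)
      next
        case False
        thus ?thesis using ys(2) True nchains_card[OF x, of U] by (simp add: xs0_def)
      qed
    next
      case False
      thus ?thesis using ys(1) by (auto simp: xs0_def hom_def)
    qed
  qed
  show ?thesis using h0 z0 s0 uniq by blast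
qed

lemma join_top:
  assumes a: "a \<in> hom N i" and i: "i \<le> N" and T: "T \<subseteq> {..<N}" and cT: "card T = N - i"
  shows "join N a (basis T) = smul (a ({..<N} - T) * (-1)^cr ({..<N} - T) T) (basis {..<N})"
proof -
  define W where "W = {..<N}"
  have a': "a \<in> nchains N" using a by (simp add: hom_def)
  have fT: "finite T" using T fin_sub by blast
  have cWT: "card (W - T) = i" using T cT i by (simp add: W_def card_Diff_subset fT)
  have "join N a (basis T) = (\<Sum>S\<in>Pow W. smul (a S) (join_basis S T))"
    unfolding join_left_expand[OF a'] W_def using T
    by (intro sum.cong refl arg_cong[where f="smul _"] join_basis_basis) auto
  also have "\<dots> = smul (a (W - T)) (join_basis (W - T) T)"
  proof (rule sum_single)
    show "finite (Pow W)" "W - T \<in> Pow W" by (auto simp: W_def)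
    fix S assume S: "S \<in> Pow W" "S \<noteq> W - T"
    show "smul (a S) (join_basis S T) = 0"
    proof (cases "a S = 0")
      case False
      hence cS: "card S = i" using a by (auto simp: hom_def)
      have fS: "finite S" using S fin_pow unfolding W_def by blast
      have "S \<inter> T \<noteq> {}"
      proof
        assume "S \<inter> T = {}"
        hence "S \<subseteq> W - T" using S by auto
        hence "S = W - T" using cS cWT card_subset_eq[of "W - T" S] by (simp add: W_def)
        thus False using S by simp
      qed
      thus ?thesis using fS fT by (simp add: join_basis_alt)
    qed simp
  qed
  also have "\<dots> = smul (a (W - T) * (-1)^cr (W - T) T) (basis W)"
  proof -
    have "(W - T) \<inter> T = {}" "(W - T) \<union> T = W" using T by (auto simp: W_def)
    thus ?thesis using fT by (simp add: join_basis_alt W_def smul_smul)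
  qed
  finally show ?thesis unfolding W_def .
qed

lemma smul_neg: "smul (- k) x = - smul k x" by (rule ext) (simp add: smul_apply)

context
  fixes N D :: nat and \<phi> :: "chain \<Rightarrow> chain"
  assumes add: "\<forall>b\<in>hom N D. \<forall>b'\<in>hom N D. \<phi> (b + b') = \<phi> b + \<phi> b'"
begin

lemma phi0: "\<phi> 0 = 0"
proof -
  have "\<phi> (0 + 0) = \<phi> 0 + \<phi> 0" using add hom_zero by blast
  thus ?thesis by simp
qed

lemma phi_neg: "x \<in> hom N D \<Longrightarrow> \<phi> (- x) = - \<phi> x"
proof -
  assume x: "x \<in> hom N D"
  have "\<phi> (x + - x) = \<phi> x + \<phi> (- x)" using add x hom_uminus by blast
  thus ?thesis using phi0 by (simp add: eq_neg_iff_add_eq_0 add.commute)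
qed

lemma phi_nat: "x \<in> hom N D \<Longrightarrow> \<phi> (smul (int n) x) = smul (int n) (\<phi> x)"
proof (induction n)
  case 0
  have "smul (int 0) x = 0" "smul (int 0) (\<phi> x) = 0" by (auto simp: fun_eq_iff smul_apply)
  thus ?case by (simp only: phi0)
next
  case (Suc n)
  have "smul (int (Suc n)) x = smul (int n) x + x" by (simp add: add_smul)
  hence "\<phi> (smul (int (Suc n)) x) = \<phi> (smul (int n) x) + \<phi> x"
    using add Suc.prems hom_smul by metis
  also have "\<dots> = smul (int n) (\<phi> x) + \<phi> x" using Suc.IH Suc.prems by metis
  also have "\<dots> = smul (int (Suc n)) (\<phi> x)" by (simp add: add_smul)
  finally show ?case .
qed

lemma phi_smul: "x \<in> hom N D \<Longrightarrow> \<phi> (smul k x) = smul k (\<phi> x)"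
proof (cases k rule: int_cases)
  case (nonneg n)
  assume "x \<in> hom N D" thus ?thesis using nonneg phi_nat by simp
next
  case (neg n)
  assume x: "x \<in> hom N D"
  have "\<phi> (smul k x) = \<phi> (- smul (int (Suc n)) x)" by (simp only: neg smul_neg)
  also have "\<dots> = - smul (int (Suc n)) (\<phi> x)" by (simp only: phi_neg[OF hom_smul[OF x]] phi_nat[OF x])
  finally show ?thesis by (simp only: neg smul_neg)
qed

lemma phi_sum: "(\<And>j. j \<in> F \<Longrightarrow> g j \<in> hom N D) \<Longrightarrow> \<phi> (sum g F) = (\<Sum>j\<in>F. \<phi> (g j))"
proof (induction F rule: infinite_finite_induct)
  case (infinite A) thus ?case using phi0 by (metis sum.infinite)
next
  case empty show ?case by (simp only: sum.empty phi0)
next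
  case (insert j F)
  have "\<phi> (sum g (insert j F)) = \<phi> (g j + sum g F)" using insert by simp
  also have "\<dots> = \<phi> (g j) + \<phi> (sum g F)" using add insert.prems hom_sum by (meson insertCI)
  also have "\<dots> = \<phi> (g j) + (\<Sum>j\<in>F. \<phi> (g j))" using insert.IH insert.prems by (metis insertCI)
  also have "\<dots> = (\<Sum>j\<in>insert j F. \<phi> (g j))" by (rule sum.insert[OF insert.hyps(1,2), symmetric])
  finally show ?case .
qed

end

lemma pairing:
  assumes i: "i \<le> N"
    and phi1: "\<forall>b\<in>hom N (N - i). \<phi> b \<in> hom N N"
    and add: "\<forall>b\<in>hom N (N - i). \<forall>b'\<in>hom N (N - i). \<phi> (b + b') = \<phi> b + \<phi> b'"
  shows "\<exists>!a. a \<in> hom N i \<and> (\<forall>b\<in>hom N (N - i). \<phi> b = join N a b)"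
proof -
  define W where "W = {..<N}"
  define D where "D = N - i"
  define \<kappa> where "\<kappa> = (\<lambda>T. \<phi> (basis T) W)"
  define a0 where "a0 = (\<lambda>U. if U \<subseteq> W \<and> card U = i then (-1)^cr U (W - U) * \<kappa> (W - U) else 0)"
  have a0: "a0 \<in> hom N i" by (auto simp: a0_def hom_def nchains_def W_def split: if_splits)
  have phiB: "\<phi> (basis T) = smul (\<kappa> T) (basis W)" if T: "T \<subseteq> W" "card T = D" for T
  proof -
    have "basis T \<in> hom N D" using hom_basis[of T N] T by (simp add: W_def)
    hence "\<phi> (basis T) \<in> hom N N" using phi1 by (simp add: D_def)
    then obtain k where k: "\<phi> (basis T) = smul k (basis W)" using hom_top[of N] by (auto simp: W_def)
    hence "\<kappa> T = k" by (simp add: \<kappa>_def smul_apply basis_apply)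
    thus ?thesis using k by simp
  qed
  have joinB: "join N a0 (basis T) = smul (\<kappa> T) (basis W)" if T: "T \<subseteq> W" "card T = D" for T
  proof -
    have "join N a0 (basis T) = smul (a0 (W - T) * (-1)^cr (W - T) T) (basis W)"
      using join_top[OF a0 i, of T] T by (simp add: W_def D_def)
    moreover have "card (W - T) = i" using T i by (simp add: W_def D_def card_Diff_subset fin_sub)
    moreover have "W - (W - T) = T" using T by auto
    ultimately show ?thesis by (simp add: a0_def smul_smul mult_ac flip: power_add) 
  qed
  have sat: "\<phi> b = join N a0 b" if b: "b \<in> hom N D" for b
  proof -
    define PD where "PD = {T\<in>Pow W. card T = D}"
    have bT: "basis T \<in> hom N D" if "T \<in> PD" for T using that hom_basis[of T N] by (auto simp: PD_def W_def)
    have be: "b = (\<Sum>T\<in>PD. smul (b T) (basis T))" using expand_hom[OF b] by (simp add: PD_def W_def)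
    have "\<phi> b = (\<Sum>T\<in>PD. \<phi> (smul (b T) (basis T)))"
      by (subst be, rule phi_sum[OF add[folded D_def]]) (auto intro: hom_smul bT)
    also have "\<dots> = (\<Sum>T\<in>PD. smul (b T) (\<phi> (basis T)))"
      by (intro sum.cong refl phi_smul[OF add[folded D_def]] bT)
    also have "\<dots> = (\<Sum>T\<in>PD. smul (b T) (join N a0 (basis T)))"
      by (intro sum.cong refl arg_cong[where f="smul _"]) (auto simp: PD_def phiB joinB)
    also have "\<dots> = join N a0 b"
      by (subst (2) be) (simp only: lin_sum_smul[OF lin_join2])
    finally show ?thesis .
  qed
  have uniq: "a = a'" if a: "a \<in> hom N i" "\<forall>b\<in>hom N D. \<phi> b = join N a b"
    and a': "a' \<in> hom N i" "\<forall>b\<in>hom N D. \<phi> b = join N a' b" for a a'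
  proof (rule ext)
    fix S show "a S = a' S"
    proof (cases "S \<subseteq> W \<and> card S = i")
      case True
      define T where "T = W - S"
      have T: "T \<subseteq> W" "card T = D" using True i by (auto simp: T_def W_def D_def card_Diff_subset fin_sub)
      have WT: "W - T = S" using True by (auto simp: T_def)
      have "basis T \<in> hom N D" using hom_basis[of T N] T by (simp add: W_def)
      hence "join N a (basis T) = join N a' (basis T)" using a a' by metis
      hence "smul (a S * (-1)^cr S T) (basis W) = smul (a' S * (-1)^cr S T) (basis W)"
        using join_top[OF a(1) i, of T] join_top[OF a'(1) i, of T] T WT by (simp add: W_def D_def)
      hence "a S * (-1)^cr S T = a' S * (-1)^cr S T"
        by (metis (no_types) basis_apply mult.right_neutral smul_apply)
      thus ?thesis by simp
    next
      case False
      hence "a S = 0" "a' S = 0" using a(1) a'(1) by (auto simp: hom_def nchains_def W_def)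
      thus ?thesis by simp
    qed
  qed
  show ?thesis unfolding D_def[symmetric] using a0 sat uniq by blast
qed

theorem theorem4p4:
  fixes N :: nat  \<comment> \<open>N = n + 1 vertices, n \<ge> -1\<close>
  shows "(\<forall>p a b. a \<in> hom N p \<longrightarrow> b \<in> nchains N \<longrightarrow>
            bdry N (join N a b) = join N (bdry N a) b + smul ((-1) ^ p) (join N a (bdry N b)))
       \<and> (\<forall>M f a b. simplex_map M N f \<longrightarrow> a \<in> nchains M \<longrightarrow> b \<in> nchains M \<longrightarrow>
            Nmap M f (join M a b) = join N (Nmap M f a) (Nmap M f b))
       \<and> poincare_duality_algebra (nchains N) (hom N) (join N) (basis {}) N"
proof (intro conjI allI impI)
  fix p a b assume "a \<in> hom N p" "b \<in> nchains N"
  thus "bdry N (join N a b) = join N (bdry N a) b + smul ((-1) ^ p) (join N a (bdry N b))"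
    by (rule leibniz)
next
  fix M f a b assume "simplex_map M N f" "a \<in> nchains M" "b \<in> nchains M"
  thus "Nmap M f (join M a b) = join N (Nmap M f a) (Nmap M f b)" by (rule natural)
next
  have one: "basis {} \<in> nchains N" using hom_basis[of "{}" N] hom_nchains by auto
  show "poincare_duality_algebra (nchains N) (hom N) (join N) (basis {}) N"
    unfolding poincare_duality_algebra_def
  proof (intro conjI ballI allI impI)
    fix k
    show "hom N k \<subseteq> nchains N" using hom_nchains by blast
    show "0 \<in> hom N k" by (rule hom_zero)
    fix x y assume "x \<in> hom N k" "y \<in> hom N k"
    thus "x + y \<in> hom N k" "- x \<in> hom N k" by (auto intro: hom_add hom_uminus)
  next
    fix x assume "x \<in> nchains N"
    thus "\<exists>!xs. (\<forall>k. xs k \<in> hom N k) \<and> (\<forall>k>N. xs k = 0) \<and> x = (\<Sum>k\<le>N. xs k)" by (rule decomp)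
  next
    fix x y show "join N x y \<in> nchains N" by (rule join_nchains)
  next
    fix x y z assume "x \<in> nchains N" "y \<in> nchains N" "z \<in> nchains N"
    thus "join N (join N x y) z = join N x (join N y z)" by (rule assoc)
  next
    fix x y z
    show "join N (x + y) z = join N x z + join N y z" by (rule lin_add[OF lin_join1])
    show "join N x (y + z) = join N x y + join N x z" by (rule lin_add[OF lin_join2])
  next
    show "basis {} \<in> nchains N" by (rule one)
  next
    fix x assume "x \<in> nchains N"
    thus "join N (basis {}) x = x" "join N x (basis {}) = x" by (auto intro: unit_left unit_right)
  next
    fix i j x y assume "x \<in> hom N i" "y \<in> hom N j"
    thus "join N x y \<in> hom N (i + j)" by (rule join_hom)
  next
    fix i j x y assume "x \<in> hom N i" "y \<in> hom N j"
    thus "join N x y = smul ((-1) ^ (i * j)) (join N y x)" by (rule comm)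
  next
    show "basis {} \<noteq> 0" by (rule basis_nz)
  next
    show "hom N 0 = range (\<lambda>k. smul k (basis {}))" by (rule hom_0)
  next
    fix k show "\<exists>G. finite G \<and> hom N k = span_Z G"
      by (intro exI[of _ "basis ` {S\<in>Pow {..<N}. card S = k}"] conjI hom_span) simp
  next
    fix k :: nat assume "N < k" thus "hom N k = {0}" by (rule hom_big)
  next
    show "\<exists>g. g \<noteq> 0 \<and> hom N N = range (\<lambda>k. smul k g)"
      using hom_top basis_nz by blast
  next
    fix i \<phi> assume "i \<le> N"
      "(\<forall>b\<in>hom N (N - i). \<phi> b \<in> hom N N) \<and> (\<forall>b\<in>hom N (N - i). \<forall>b'\<in>hom N (N - i). \<phi> (b + b') = \<phi> b + \<phi> b')"
    thus "\<exists>!a. a \<in> hom N i \<and> (\<forall>b\<in>hom N (N - i). \<phi> b = join N a b)"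
      using pairing by blast
  qed
qed


end
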